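(* For every measurement assemblage $\vec B$ on $\mathcal H$, $$\mathbb{IR}^{\rm JM}(\vec B)=\max_{\rho_B}\mathbb{SR}^{\rm C\text{-}LHS}\big(\rho_B^{1/2}\vec B\rho_B^{1/2}\big),$$ where the maximum is over density operators $\rho_B$ on $\mathcal H$. Moreover, every full-rank density operator $\rho_B$ attains the maximum.
   Context: All Hilbert spaces are finite-dimensional. A measurement assemblage (MA) on $\mathcal H$ is a family $\vec M=\{M_{a|x}\}_{a,x}$, with $x$ ranging over a finite input set and $a$ over a finite outcome set $\mathcal A$, such that for each $x$, $\{M_{a|x}\}_a$ is a POVM. $\vec M$ is jointly measurable, written $\vec M\in\mathbb{JM}$, if there exist a finite POVM $\{G_\lambda\}_\lambda$ and conditional probability distributions $p(a|x,\lambda)$ with $M_{a|x}=\sum_\lambda p(a|x,\lambda)G_\lambda$ for all $a,x$. A state assemblage (SA) on $\mathcal H$ is a family $\vec\sigma=\{\sigma_{a|x}\}_{a,x}$ of positive semidefinite operators such that $\sum_a\sigma_{a|x}=\rho$ is independent of $x$ and $\mathrm{tr}\rho=1$; $\rho$ is called its reduced state. $\vec\sigma$ admits a local hidden state model, written $\vec\sigma\in\mathbb{LHS}$, if $\sigma_{a|x}=\sum_\lambda p(\lambda)p(a|x,\lambda)\rho_\lambda$ for some finite probability distribution $p(\lambda)$, conditional distributions $p(a|x,\lambda)$ and density operators $\rho_\lambda$. JM incompatibility robustness: $\mathbb{IR}^{\rm JM}(\vec M)=\min\{t\ge0:\exists\ \vec D',\vec D\in\mathbb{JM}$ with $(M_{a|x}+tD'_{a|x})/(1+t)=D_{a|x}\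 \forall a,x\}$. Consistent LHS steering robustness of an SA $\vec\sigma$ with reduced state $\rho$: $\mathbb{SR}^{\rm C\text{-}LHS}(\vec\sigma)=\min\{t\ge0:\exists\ \vec\tau',\vec\tau\in\mathbb{LHS}$, both with reduced state $\rho$, with $(\sigma_{a|x}+t\tau'_{a|x})/(1+t)=\tau_{a|x}\ \forall a,x\}$. For a density operator $\rho$ and an MA $\vec B$, $\rho^{1/2}\vec B\rho^{1/2}$ denotes the SA $\{\rho^{1/2}B_{a|x}\rho^{1/2}\}_{a,x}$, with reduced state $\rho$. *)

theory Defs
  imports "HOL-Analysis.Analysis"
begin

text \<open>Operators on the finite-dimensional Hilbert space complex^'n are
  matrices of type complex^'n^'n (dimension CARD('n)).\<close>

definition adj :: "complex^'n^'n \<Rightarrow> complex^'n^'n" where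
  "adj A = (\<chi> i j. cnj (A $ j $ i))"

definition mtrace :: "complex^'n^'n \<Rightarrow> complex" where
  "mtrace A = (\<Sum>i\<in>UNIV. A $ i $ i)"

definition psd :: "complex^'n^'n \<Rightarrow> bool" where
  "psd A \<longleftrightarrow> adj A = A \<and>
     (\<forall>v::complex^'n. 0 \<le> Re (\<Sum>i\<in>UNIV. cnj (v $ i) * (A *v v) $ i))"

definition density_op :: "complex^'n^'n \<Rightarrow> bool" where
  "density_op \<rho> \<longleftrightarrow> psd \<rho> \<and> mtrace \<rho> = 1"

definition msqrt :: "complex^'n^'n \<Rightarrow> complex^'n^'n" where
  "msqrt A = (THE S. psd S \<and> S ** S = A)"

definition is_POVM :: "('o::finite \<Rightarrow> complex^'n^'n) \<Rightarrow> bool" where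
  "is_POVM E \<longleftrightarrow> (\<forall>a. psd (E a)) \<and> (\<Sum>a\<in>UNIV. E a) = mat 1"

text \<open>Measurement assemblage: M a x = M_{a|x}.\<close>
definition is_MA :: "('o::finite \<Rightarrow> 'x::finite \<Rightarrow> complex^'n^'n) \<Rightarrow> bool" where
  "is_MA M \<longleftrightarrow> (\<forall>x. is_POVM (\<lambda>a. M a x))"

definition cond_prob :: "('o::finite \<Rightarrow> 'x \<Rightarrow> nat \<Rightarrow> real) \<Rightarrow> nat \<Rightarrow> bool" where
  "cond_prob p m \<longleftrightarrow> (\<forall>a x l. l < m \<longrightarrow> 0 \<le> p a x l) \<and>
                      (\<forall>x l. l < m \<longrightarrow> (\<Sum>a\<in>UNIV. p a x l) = 1)"

definition JM :: "('o::finite \<Rightarrow> 'x::finite \<Rightarrow> complex^'n^'n) \<Rightarrow> bool" where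
  "JM M \<longleftrightarrow> (\<exists>(m::nat) (G::nat \<Rightarrow> complex^'n^'n) p.
      (\<forall>l<m. psd (G l)) \<and> (\<Sum>l<m. G l) = mat 1 \<and> cond_prob p m \<and>
      (\<forall>a x. M a x = (\<Sum>l<m. p a x l *\<^sub>R G l)))"

definition is_SA :: "('o::finite \<Rightarrow> 'x::finite \<Rightarrow> complex^'n^'n) \<Rightarrow> complex^'n^'n \<Rightarrow> bool" where
  "is_SA \<sigma> \<rho> \<longleftrightarrow> (\<forall>a x. psd (\<sigma> a x)) \<and> (\<forall>x. (\<Sum>a\<in>UNIV. \<sigma> a x) = \<rho>) \<and> mtrace \<rho> = 1"

definition LHS :: "('o::finite \<Rightarrow> 'x::finite \<Rightarrow> complex^'n^'n) \<Rightarrow> bool" where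
  "LHS \<sigma> \<longleftrightarrow> (\<exists>(m::nat) (q::nat \<Rightarrow> real) p (R::nat \<Rightarrow> complex^'n^'n).
      (\<forall>l<m. 0 \<le> q l) \<and> (\<Sum>l<m. q l) = 1 \<and> cond_prob p m \<and>
      (\<forall>l<m. density_op (R l)) \<and>
      (\<forall>a x. \<sigma> a x = (\<Sum>l<m. (q l * p a x l) *\<^sub>R R l)))"

text \<open>JM incompatibility robustness (the minimum, written as an infimum).\<close>
definition IR_JM :: "('o::finite \<Rightarrow> 'x::finite \<Rightarrow> complex^'n^'n) \<Rightarrow> real" where
  "IR_JM M = Inf {t. 0 \<le> t \<and> (\<exists>D' D. JM D' \<and> JM D \<and>
      (\<forall>a x. (1 / (1 + t)) *\<^sub>R (M a x + t *\<^sub>R D' a x) = D a x))}"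

definition SR_CLHS :: "('o::finite \<Rightarrow> 'x::finite \<Rightarrow> complex^'n^'n) \<Rightarrow> real" where
  "SR_CLHS \<sigma> = Inf {t. 0 \<le> t \<and> (\<exists>\<tau>' \<tau>. LHS \<tau>' \<and> LHS \<tau> \<and>
      (\<forall>x. (\<Sum>a\<in>UNIV. \<tau>' a x) = (\<Sum>a\<in>UNIV. \<sigma> a x)) \<and>
      (\<forall>x. (\<Sum>a\<in>UNIV. \<tau> a x) = (\<Sum>a\<in>UNIV. \<sigma> a x)) \<and>
      (\<forall>a x. (1 / (1 + t)) *\<^sub>R (\<sigma> a x + t *\<^sub>R \<tau>' a x) = \<tau> a x))}"

definition sandwich :: "complex^'n^'n \<Rightarrow> ('o \<Rightarrow> 'x \<Rightarrow> complex^'n^'n) \<Rightarrow> ('o \<Rightarrow> 'x \<Rightarrow> complex^'n^'n)" where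
  "sandwich \<rho> B = (\<lambda>a x. msqrt \<rho> ** B a x ** msqrt \<rho>)"

end

theory Submission
  imports Defs
begin


definition cinner :: "complex^'n \<Rightarrow> complex^'n \<Rightarrow> complex" where
  "cinner u w = (\<Sum>i\<in>UNIV. cnj (u$i) * w$i)"
definition qf :: "complex^'n^'n \<Rightarrow> complex^'n \<Rightarrow> complex" where
  "qf A v = cinner v (A *v v)"

lemma psd_iff: "psd A \<longleftrightarrow> adj A = A \<and> (\<forall>v. 0 \<le> Re (qf A v))"
  by (simp add: psd_def qf_def cinner_def)

lemma adj_adj[simp]: "adj (adj A) = A" by (simp add: adj_def vec_eq_iff)
lemma adj_mult: "adj (A ** B) = adj B ** adj A"
  by (simp add: adj_def matrix_matrix_mult_def vec_eq_iff mult.commute)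
lemma adj_add: "adj (A + B) = adj A + adj B"
  by (simp add: adj_def vec_eq_iff)
lemma adj_scaleR: "adj (c *\<^sub>R A) = c *\<^sub>R adj A"
  by (simp add: adj_def vec_eq_iff)
lemma adj_mat: "adj (mat 1) = mat 1"
  by (simp add: adj_def vec_eq_iff mat_def)
lemma adj_zero[simp]: "adj 0 = 0"
  by (simp add: adj_def vec_eq_iff)
lemma adj_sum: "adj (sum f S) = sum (\<lambda>l. adj (f l)) S"
  by (induction S rule: infinite_finite_induct) (auto simp: adj_add)

lemma cinner_adj: "cinner u (A *v w) = cinner (adj A *v u) w"
proof -
  have "cinner u (A *v w) = (\<Sum>i\<in>UNIV. \<Sum>j\<in>UNIV. cnj (u$i) * A$i$j * w$j)"
    by (simp add: cinner_def matrix_vector_mult_def sum_distrib_left mult.assoc)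
  also have "\<dots> = (\<Sum>j\<in>UNIV. \<Sum>i\<in>UNIV. cnj (u$i) * A$i$j * w$j)"
    by (rule sum.swap)
  also have "\<dots> = cinner (adj A *v u) w"
    by (simp add: cinner_def matrix_vector_mult_def adj_def sum_distrib_right sum_distrib_left mult_ac)
  finally show ?thesis .
qed

lemma cinner_add_right: "cinner u (v + w) = cinner u v + cinner u w"
  by (simp add: cinner_def algebra_simps sum.distrib)
lemma cinner_add_left: "cinner (u + v) w = cinner u w + cinner v w"
  by (simp add: cinner_def algebra_simps sum.distrib)
lemma cinner_diff_right: "cinner u (v - w) = cinner u v - cinner u w"
  by (simp add: cinner_def algebra_simps sum_subtractf)
lemma cinner_diff_left: "cinner (u - v) w = cinner u w - cinner v w"
  by (simp add: cinner_def algebra_simps sum_subtractf)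
lemma cinner_scale_right: "cinner u (c *s w) = c * cinner u w"
  by (simp add: cinner_def sum_distrib_left mult_ac)
lemma cinner_scale_left: "cinner (c *s u) w = cnj c * cinner u w"
  by (simp add: cinner_def sum_distrib_left mult_ac)
lemma cinner_sym: "cinner w u = cnj (cinner u w)"
  by (simp add: cinner_def mult.commute)
lemma cinner_zero_left[simp]: "cinner 0 u = 0" by (simp add: cinner_def)
lemma cinner_zero_right[simp]: "cinner u 0 = 0" by (simp add: cinner_def)
lemma mat_vec_scale: "(A::complex^'n^'m) *v (c *s v) = c *s (A *v v)"
  by (simp add: matrix_vector_mult_def vec_eq_iff sum_distrib_left mult.left_commute)

lemma zcnj: "z * cnj z = (complex_of_real (cmod z))^2"
  by (simp add: complex_norm_square[symmetric])
lemma zcnj2: "cnj z * z = (complex_of_real (cmod z))^2"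
  by (simp add: complex_norm_square[symmetric] mult.commute)

lemma cinner_self: "cinner v v = of_real ((norm v)^2)"
proof -
  have "(norm v)^2 = (\<Sum>i\<in>UNIV. (cmod (v$i))^2)"
    by (simp add: norm_vec_def L2_set_def sum_nonneg)
  have "cinner v v = (\<Sum>i\<in>UNIV. of_real ((cmod (v$i))^2))" unfolding cinner_def
    by (intro sum.cong refl) (simp add: zcnj2)
  also have "\<dots> = of_real (\<Sum>i\<in>UNIV. (cmod (v$i))^2)" by (simp only: of_real_sum)
  finally show ?thesis using \<open>(norm v)^2 = _\<close> by simp
qed

lemma cinner_self_eq0: "cinner v v = 0 \<longleftrightarrow> v = 0"
  by (simp add: cinner_self)

lemma qf_herm_real: assumes "adj A = A" shows "cnj (qf A v) = qf A v"
proof -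
  have 1: "cinner v (A *v v) = cinner (A *v v) v" using cinner_adj[of v A v] assms by simp
  have 2: "cinner (A *v v) v = cnj (cinner v (A *v v))" by (rule cinner_sym)
  show ?thesis unfolding qf_def using 1 2 by (metis complex_cnj_cnj)
qed

lemma cinner_herm: assumes "adj M = M" shows "cinner v (M *v u) = cnj (cinner u (M *v v))"
  by (metis assms cinner_adj cinner_sym)

lemma qf_expand:
  "qf M (v + t *s u) = qf M v + t * cinner v (M *v u) + cnj t * cinner u (M *v v) + (cnj t * t) * qf M u"
  by (simp add: qf_def matrix_vector_right_distrib mat_vec_scale cinner_add_left cinner_add_right
      cinner_scale_left cinner_scale_right algebra_simps)

lemma form_zero:
  assumes herm: "adj M = M" and v0: "Re (qf M v) = 0" and b: "0 \<le> Re (qf M u)"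
    and pos: "\<And>t. 0 \<le> Re (qf M (v + t *s u))"
  shows "cinner u (M *v v) = 0"
proof -
  define a where "a = cinner u (M *v v)"
  define b where "b = Re (qf M u)"
  have qfu: "qf M u = of_real b"
    using qf_herm_real[OF herm, of u] unfolding b_def by (metis Reals_cnj_iff of_real_Re)
  have bp: "b + 1 > 0" using b b_def by simp
  define r where "r = 1 / (b + 1)"
  have rp: "r > 0" using bp by (simp add: r_def)
  have rb: "r * b < 1" using bp by (simp add: r_def field_simps)
  define t where "t = - (of_real r * a)"
  have "0 \<le> Re (qf M (v + t *s u))" by (rule pos)
  also have "qf M (v + t *s u) = qf M v + t * cnj a + cnj t * a + (cnj t * t) * of_real b"
  proof -
    have "cinner v (M *v u) = cnj a" unfolding a_def by (rule cinner_herm[OF herm])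
    then show ?thesis by (simp add: qf_expand a_def qfu)
  qed
  also have "t * cnj a = - of_real (r * (cmod a)^2)"
  proof -
    have "t * cnj a = - (of_real r * (a * cnj a))" unfolding t_def by (simp add: algebra_simps)
    then show ?thesis by (simp add: zcnj)
  qed
  also have "cnj t * a = - of_real (r * (cmod a)^2)"
  proof -
    have "cnj t * a = - (of_real r * (a * cnj a))" unfolding t_def by (simp add: algebra_simps)
    then show ?thesis by (simp add: zcnj)
  qed
  also have "cnj t * t = of_real (r^2 * (cmod a)^2)"
  proof -
    have "cnj t * t = of_real r * of_real r * (a * cnj a)" unfolding t_def by (simp add: algebra_simps)
    then show ?thesis by (simp add: zcnj power2_eq_square)
  qed
  finally have "0 \<le> Re (qf M v) - 2 * (r * (cmod a)^2) + r^2 * (cmod a)^2 * b"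
    by simp
  then have "0 \<le> (cmod a)^2 * (r * (r * b - 2))"
    using v0 by (simp add: algebra_simps power2_eq_square)
  moreover have "r * (r * b - 2) < 0" using rp rb by (simp add: mult_pos_neg)
  ultimately have "(cmod a)^2 \<le> 0" by (meson mult_pos_neg not_le)
  then show ?thesis unfolding a_def by simp
qed



lemma cscaleR: "r *\<^sub>R (z::complex) = of_real r * z"
  by (simp add: scaleR_conv_of_real)

lemma mv_axis: "((A::complex^'n^'n) *v axis i 1) $ k = A $ k $ i"
  by (simp add: matrix_vector_mult_def axis_def if_distrib if_distribR cong: if_cong)

lemma scaleR_mv: "(c *\<^sub>R (A::complex^'n^'n)) *v x = of_real c *s (A *v x)"
  by (simp add: matrix_vector_mult_def vec_eq_iff sum_distrib_left cscaleR mult.assoc)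

lemma scaleR_vec_conv: "c *\<^sub>R (w::complex^'n) = of_real c *s w"
  by (simp add: vec_eq_iff cscaleR)

lemma sum_mv: "(sum f S) *v (x::complex^'n) = sum (\<lambda>l. f l *v x) S"
  by (induction S rule: infinite_finite_induct) (auto simp: matrix_vector_mult_add_rdistrib)

lemma mv_sum: "(A::complex^'n^'n) *v (sum f S) = sum (\<lambda>l. A *v f l) S"
  by (induction S rule: infinite_finite_induct) (auto simp: matrix_vector_right_distrib)

lemma cinner_sum_right: "cinner u (sum f S) = sum (\<lambda>l. cinner u (f l)) S"
  by (induction S rule: infinite_finite_induct) (auto simp: cinner_add_right)

lemma cinner_sum_left: "cinner (sum f S) u = sum (\<lambda>l. cinner (f l) u) S"
  by (induction S rule: infinite_finite_induct) (auto simp: cinner_add_left)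

lemma qf_add: "qf (A + B) v = qf A v + qf B v"
  by (simp add: qf_def matrix_vector_mult_add_rdistrib cinner_add_right)
lemma qf_diff: "qf (A - B) v = qf A v - qf B v"
  by (simp add: qf_def matrix_vector_mult_diff_rdistrib cinner_diff_right)
lemma qf_scaleR: "qf (c *\<^sub>R A) v = of_real c * qf A v"
  by (simp add: qf_def scaleR_mv cinner_scale_right)
lemma qf_zero[simp]: "qf 0 v = 0"
  by (simp add: qf_def)
lemma qf_sum: "qf (sum f S) v = sum (\<lambda>l. qf (f l) v) S"
  by (simp add: qf_def sum_mv cinner_sum_right)
lemma qf_mat1: "qf (mat 1) v = cinner v v"
  by (simp add: qf_def)
lemma qf_scale_vec: "qf A (c *s v) = (cnj c * c) * qf A v"
  by (simp add: qf_def mat_vec_scale cinner_scale_left cinner_scale_right)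
lemma qf_scaleR_vec: "qf A (c *\<^sub>R v) = of_real (c^2) * qf A v"
  by (simp add: scaleR_vec_conv qf_scale_vec power2_eq_square)

lemma psd_add: "psd A \<Longrightarrow> psd B \<Longrightarrow> psd (A + B)"
  by (simp add: psd_iff adj_add qf_add)
lemma psd_scaleR: "psd A \<Longrightarrow> 0 \<le> c \<Longrightarrow> psd (c *\<^sub>R A)"
  by (simp add: psd_iff adj_scaleR qf_scaleR)
lemma psd_zero: "psd 0"
  by (simp add: psd_iff)
lemma psd_sum: "(\<And>l. l \<in> S \<Longrightarrow> psd (f l)) \<Longrightarrow> psd (sum f S)"
  by (induction S rule: infinite_finite_induct) (auto simp: psd_zero psd_add)
lemma psd_mat1: "psd (mat 1)"
  by (simp add: psd_iff adj_mat qf_mat1 cinner_self)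

lemma psd_congr:
  assumes "psd G" shows "psd (adj X ** G ** X)"
proof -
  have h: "adj G = G" using assms by (simp add: psd_iff)
  have "adj (adj X ** G ** X) = adj X ** G ** X"
    by (simp add: adj_mult h matrix_mul_assoc)
  moreover have "qf (adj X ** G ** X) v = qf G (X *v v)" for v
    by (simp add: qf_def matrix_vector_mul_assoc[symmetric] cinner_adj)
  ultimately show ?thesis using assms by (simp add: psd_iff)
qed

lemma psd_kernel:
  assumes "psd A" "Re (qf A v) = 0" shows "A *v v = 0"
proof -
  have h: "adj A = A" and p: "\<And>w. 0 \<le> Re (qf A w)" using assms by (auto simp: psd_iff)
  have "cinner (A *v v) (A *v v) = 0"
    by (rule form_zero[OF h assms(2) p p])
  then show ?thesis by (simp add: cinner_self_eq0)
qed

lemma diag_qf: "(A::complex^'n^'n) $ i $ i = qf A (axis i 1)"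
  by (simp add: qf_def cinner_def axis_def if_distrib if_distribR mv_axis[symmetric] cong: if_cong)

lemma herm_real: assumes "cnj z = z" shows "z = of_real (Re z)"
  using assms by (metis Reals_cnj_iff of_real_Re)

lemma psd_diag: assumes "psd A"
  shows "A $ i $ i = of_real (Re (A $ i $ i)) \<and> 0 \<le> Re (A $ i $ i)"
  using assms qf_herm_real[of A "axis i 1"] herm_real[of "A $ i $ i"]
  by (auto simp: psd_iff diag_qf)

lemma mtrace_add: "mtrace (A + B) = mtrace A + mtrace B"
  by (simp add: mtrace_def sum.distrib)
lemma mtrace_diff: "mtrace (A - B) = mtrace A - mtrace B"
  by (simp add: mtrace_def sum_subtractf)
lemma mtrace_scaleR: "mtrace (c *\<^sub>R A) = of_real c * mtrace A"
  by (simp add: mtrace_def sum_distrib_left cscaleR)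
lemma mtrace_zero[simp]: "mtrace 0 = 0"
  by (simp add: mtrace_def)
lemma mtrace_sum: "mtrace (sum f S) = sum (\<lambda>l. mtrace (f l)) S"
  by (induction S rule: infinite_finite_induct) (auto simp: mtrace_add)
lemma mtrace_comm: "mtrace ((A::complex^'n^'n) ** B) = mtrace (B ** A)"
  unfolding mtrace_def matrix_matrix_mult_def
  by (simp add: mult.commute) (rule sum.swap)
lemma mtrace_mat1: "mtrace (mat 1 :: complex^'n^'n) = of_nat CARD('n)"
  by (simp add: mtrace_def mat_def)

lemma psd_trace: assumes "psd A"
  shows "mtrace A = of_real (Re (mtrace A)) \<and> 0 \<le> Re (mtrace A)"
proof -
  have "mtrace A = (\<Sum>i\<in>UNIV. of_real (Re (A $ i $ i)))"
    unfolding mtrace_def using psd_diag[OF assms] by (intro sum.cong) auto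
  then show ?thesis using psd_diag[OF assms] by (auto intro!: sum_nonneg)
qed

lemma psd_trace0: assumes "psd A" "mtrace A = 0" shows "A = 0"
proof -
  have "(\<Sum>i\<in>UNIV. Re (A $ i $ i)) = 0" using assms(2)
    by (metis Re_sum mtrace_def zero_complex.simps(1))
  then have z: "Re (A $ i $ i) = 0" for i
    using psd_diag[OF assms(1)] sum_nonneg_eq_0_iff[of UNIV "\<lambda>i. Re (A $ i $ i)"] by auto
  have "A *v axis i 1 = 0" for i
    by (rule psd_kernel[OF assms(1)]) (use z[of i] in \<open>simp add: diag_qf\<close>)
  then have "A $ k $ i = 0" for k i
    using mv_axis[of A i k] by simp
  then show ?thesis by (simp add: vec_eq_iff)
qed



definition eigsys :: "complex^'n^'n \<Rightarrow> (complex^'n) set \<Rightarrow> (complex^'n \<Rightarrow> real) \<Rightarrow> bool" where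
  "eigsys A E lam \<longleftrightarrow> finite E \<and> (\<forall>e\<in>E. cinner e e = 1 \<and> A *v e = of_real (lam e) *s e) \<and>
     (\<forall>e\<in>E. \<forall>f\<in>E. e \<noteq> f \<longrightarrow> cinner e f = 0)"

lemma adj_diff: "adj (A - B) = adj A - adj B"
  by (simp add: adj_def vec_eq_iff)

lemma inner_cinner: "inner x y = Re (cinner (x::complex^'n) y)"
  by (simp add: inner_vec_def cinner_def inner_complex_def)

lemma eigsys_card: fixes E :: "(complex^'n) set" assumes "eigsys A E lam" shows "card E \<le> DIM(complex^'n)"
proof -
  have o: "cinner e f = 0" if "e \<in> E" "f \<in> E" "e \<noteq> f" for e f
    using assms that unfolding eigsys_def by blast
  have "pairwise orthogonal E"
    unfolding pairwise_def orthogonal_def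
  proof (intro ballI impI)
    fix e f assume "e \<in> E" "f \<in> E" "e \<noteq> f"
    then show "e \<bullet> f = 0" using o[of e f] by (simp add: inner_cinner)
  qed
  moreover have "0 \<notin> E"
  proof
    assume z: "0 \<in> E"
    have "\<forall>e\<in>E. cinner e e = 1" using assms unfolding eigsys_def by blast
    from this z have "cinner (0::complex^'n) 0 = 1" by blast
    then show False by simp
  qed
  ultimately have "independent E" by (rule pairwise_orthogonal_independent)
  then show ?thesis by (rule independent_bound[THEN conjunct2])
qed

lemma ortho_coef:
  assumes "eigsys A E lam" "e \<in> E"
  shows "cinner e (\<Sum>f\<in>E. c f *s f) = c e"
proof -
  have fin: "finite E" using assms unfolding eigsys_def by auto
  have "cinner e (\<Sum>f\<in>E. c f *s f) = (\<Sum>f\<in>E. c f * cinner e f)"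
    by (simp add: cinner_sum_right cinner_scale_right)
  also have "\<dots> = c e * cinner e e + (\<Sum>f\<in>E-{e}. c f * cinner e f)"
    using fin assms(2) by (simp add: sum.remove)
  also have "(\<Sum>f\<in>E-{e}. c f * cinner e f) = 0"
    using assms unfolding eigsys_def by (intro sum.neutral) auto
  finally show ?thesis using assms unfolding eigsys_def by auto
qed

lemma herm_spectral:
  fixes A :: "complex^'n^'n"
  assumes herm: "adj A = A"
  shows "\<exists>E lam. eigsys A E lam \<and> (\<forall>x. x = (\<Sum>e\<in>E. cinner e x *s e))"
proof -
  define C where "C = {card E | E. \<exists>lam. eigsys A E lam}"
  have Csub: "C \<subseteq> {..DIM(complex^'n)}" unfolding C_def using eigsys_card by auto
  then have finC: "finite C" by (rule finite_subset) auto
  have e0: "eigsys A {} (\<lambda>_. 0)" by (simp add: eigsys_def)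
  have "card ({}::(complex^'n) set) \<in> C" unfolding C_def mem_Collect_eq
    by (rule exI[of _ "{}"]) (use e0 in blast)
  then have "0 \<in> C" by simp
  then have "Max C \<in> C" using finC by (intro Max_in) auto
  then obtain E where cE: "card E = Max C" and "\<exists>lam. eigsys A E lam"
    unfolding C_def mem_Collect_eq by metis
  then obtain lam where E: "eigsys A E lam" by blast
  have finE: "finite E" using E unfolding eigsys_def by auto
  have full: "x = (\<Sum>e\<in>E. cinner e x *s e)" for x
  proof (rule ccontr)
    assume neq: "x \<noteq> (\<Sum>e\<in>E. cinner e x *s e)"
    define r where "r = x - (\<Sum>e\<in>E. cinner e x *s e)"
    have r0: "r \<noteq> 0" using neq unfolding r_def by simp
    define W where "W = {w. \<forall>e\<in>E. cinner e w = 0}"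
    have rW: "r \<in> W" unfolding W_def r_def
      using ortho_coef[OF E] by (simp add: cinner_diff_right)
    have Wadd: "u \<in> W \<Longrightarrow> w \<in> W \<Longrightarrow> u + t *s w \<in> W" for u w t
      unfolding W_def by (simp add: cinner_add_right cinner_scale_right)
    have W0: "0 \<in> W" unfolding W_def by simp
    have WR: "w \<in> W \<Longrightarrow> c *\<^sub>R w \<in> W" for w c
      using Wadd[OF W0, of w "of_real c"] by (simp add: scaleR_vec_conv)
    define K where "K = W \<inter> sphere 0 1"
    have "W = (\<Inter>e\<in>E. {w. cinner e w = 0})" unfolding W_def by auto
    moreover have "closed {w. cinner e w = 0}" for e :: "complex^'n"
      unfolding cinner_def by (intro closed_Collect_eq continuous_intros)
    ultimately have "closed W" by auto
    then have cK: "compact K" unfolding K_def by (rule closed_Int_compact[OF _ compact_sphere])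
    have "(1 / norm r) *\<^sub>R r \<in> K" using r0 rW WR unfolding K_def by auto
    then have neK: "K \<noteq> {}" by auto
    have "continuous_on K (\<lambda>w. Re (qf A w))"
      unfolding qf_def cinner_def matrix_vector_mult_def by (intro continuous_intros)
    then obtain v where vK: "v \<in> K" and vmax: "\<And>w. w \<in> K \<Longrightarrow> Re (qf A w) \<le> Re (qf A v)"
      using continuous_attains_sup[OF cK neK] by blast
    define \<mu> where "\<mu> = Re (qf A v)"
    define M where "M = \<mu> *\<^sub>R mat 1 - A"
    have vW: "v \<in> W" and nv: "norm v = 1" using vK unfolding K_def by auto
    have cvv: "cinner v v = 1" using nv by (simp add: cinner_self)
    have qfM: "qf M w = of_real \<mu> * cinner w w - qf A w" for w
      by (simp add: M_def qf_diff qf_scaleR qf_mat1)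
    have hM: "adj M = M" by (simp add: M_def adj_diff adj_scaleR adj_mat herm)
    have Mpos: "0 \<le> Re (qf M w)" if "w \<in> W" for w
    proof (cases "w = 0")
      case True then show ?thesis by (simp add: qf_def)
    next
      case False
      then have nw: "norm w > 0" by simp
      have "(1 / norm w) *\<^sub>R w \<in> K" using that WR False unfolding K_def by auto
      then have "Re (qf A ((1 / norm w) *\<^sub>R w)) \<le> \<mu>" using vmax unfolding \<mu>_def by blast
      then have "Re (qf A w) / (norm w)^2 \<le> \<mu>"
        by (simp add: qf_scaleR_vec power_divide)
      then have "Re (qf A w) \<le> \<mu> * (norm w)^2" using nw by (simp add: divide_le_eq)
      then show ?thesis by (simp add: qfM cinner_self)
    qed
    have Mv0: "Re (qf M v) = 0" by (simp add: qfM cvv \<mu>_def)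
    have orthoMv: "cinner u (M *v v) = 0" if "u \<in> W" for u
      by (rule form_zero[OF hM Mv0 Mpos[OF that]]) (rule Mpos, rule Wadd[OF vW that])
    have MvW': "\<forall>e\<in>E. cinner e (M *v v) = 0"
    proof
      fix e assume eE: "e \<in> E"
      have ev: "cinner e v = 0" using vW eE unfolding W_def by auto
      have "cinner e (A *v v) = cinner (A *v e) v" using cinner_adj[of e A v] herm by simp
      also have "\<dots> = 0" using E eE ev unfolding eigsys_def by (simp add: cinner_scale_left)
      finally show "cinner e (M *v v) = 0"
        by (simp add: M_def matrix_vector_mult_diff_rdistrib cinner_diff_right scaleR_mv
            cinner_scale_right ev)
    qed
    then have MvW: "M *v v \<in> W" unfolding W_def by simp
    have "M *v v = 0" using orthoMv[OF MvW] by (simp add: cinner_self_eq0)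
    then have Av: "A *v v = of_real \<mu> *s v"
      by (simp add: M_def matrix_vector_mult_diff_rdistrib scaleR_mv)
    have vE: "v \<notin> E"
    proof
      assume "v \<in> E"
      then have "cinner v v = 0" using vW unfolding W_def by auto
      then show False using cvv by simp
    qed
    have vf: "\<forall>f\<in>E. cinner v f = 0"
    proof
      fix f assume "f \<in> E"
      then have "cinner f v = 0" using vW unfolding W_def by auto
      then show "cinner v f = 0" using cinner_sym[of v f] by simp
    qed
    have "eigsys A (insert v E) (lam(v := \<mu>))"
      using E vE Av cvv vW vf unfolding eigsys_def W_def
      by auto
    then have "card (insert v E) \<in> C" unfolding C_def mem_Collect_eq
      by (intro exI[of _ "insert v E"]) blast
    then have "card (insert v E) \<le> Max C" using finC by simp
    then show False using cE vE finE by simp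
  qed
  show ?thesis
    by (rule exI[of _ E], rule exI[of _ lam], rule conjI[OF E], rule allI, rule full)
qed



definition outer :: "complex^'n \<Rightarrow> complex^'n \<Rightarrow> complex^'n^'n" where
  "outer u w = (\<chi> i j. u$i * cnj (w$j))"

lemma outer_mv: "outer u w *v x = cinner w x *s u"
  by (simp add: outer_def matrix_vector_mult_def cinner_def vec_eq_iff sum_distrib_left mult_ac)

lemma adj_outer: "adj (outer u u) = outer u u"
  by (simp add: outer_def adj_def vec_eq_iff mult.commute)

lemma sum_smult_cinner: "cinner x (\<Sum>e\<in>E. c e *s e) = (\<Sum>e\<in>E. c e * cinner x e)"
  by (simp add: cinner_sum_right cinner_scale_right)

lemma psd_sqrt_ex:
  fixes A :: "complex^'n^'n"
  assumes psdA: "psd A"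
  shows "\<exists>S. psd S \<and> S ** S = A"
proof -
  have "adj A = A" using psdA by (simp add: psd_iff)
  then obtain E lam where E: "eigsys A E lam" and full: "\<forall>x. x = (\<Sum>e\<in>E. cinner e x *s e)"
    using herm_spectral by blast
  have Ae: "A *v e = of_real (lam e) *s e" if "e \<in> E" for e
    using E that unfolding eigsys_def by blast
  have ee: "cinner e e = 1" if "e \<in> E" for e
    using E that unfolding eigsys_def by blast
  have lam0: "0 \<le> lam e" if "e \<in> E" for e
  proof -
    have "qf A e = of_real (lam e)" by (simp add: qf_def Ae[OF that] cinner_scale_right ee[OF that])
    then show ?thesis using psdA by (metis Re_complex_of_real psd_iff)
  qed
  define s where "s e = sqrt (lam e)" for e
  have ss: "of_real (s e) * of_real (s e) = (of_real (lam e) :: complex)" if "e \<in> E" for e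
    using lam0[OF that] by (simp add: s_def flip: of_real_mult)
  define S where "S = (\<Sum>e\<in>E. s e *\<^sub>R outer e e)"
  have Sx: "S *v x = (\<Sum>e\<in>E. (of_real (s e) * cinner e x) *s e)" for x
    by (simp add: S_def sum_mv scaleR_mv outer_mv vector_smult_assoc)
  have Ax: "A *v x = (\<Sum>e\<in>E. (of_real (lam e) * cinner e x) *s e)" for x
  proof -
    have "A *v x = A *v (\<Sum>e\<in>E. cinner e x *s e)" by (rule arg_cong[OF full[rule_format]])
    also have "\<dots> = (\<Sum>e\<in>E. cinner e x *s (A *v e))" by (simp add: mv_sum mat_vec_scale)
    also have "\<dots> = (\<Sum>e\<in>E. (of_real (lam e) * cinner e x) *s e)"
      by (intro sum.cong refl) (simp add: Ae vector_smult_assoc mult.commute)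
    finally show ?thesis .
  qed
  have SSx: "S *v (S *v x) = A *v x" for x
  proof -
    have "S *v (S *v x) = (\<Sum>e\<in>E. (of_real (s e) * cinner e (S *v x)) *s e)" by (rule Sx)
    also have "\<dots> = (\<Sum>e\<in>E. (of_real (lam e) * cinner e x) *s e)"
    proof (intro sum.cong refl)
      fix e assume eE: "e \<in> E"
      have "cinner e (S *v x) = of_real (s e) * cinner e x"
        unfolding Sx by (rule ortho_coef[OF E eE])
      then show "(of_real (s e) * cinner e (S *v x)) *s e = (of_real (lam e) * cinner e x) *s e"
        using ss[OF eE] by (simp add: mult.assoc[symmetric])
    qed
    also have "\<dots> = A *v x" by (rule Ax[symmetric])
    finally show ?thesis .
  qed
  have SS: "S ** S = A"
    unfolding matrix_eq by (simp add: matrix_vector_mul_assoc[symmetric] SSx)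
  have hS: "adj S = S" by (simp add: S_def adj_sum adj_scaleR adj_outer)
  have "0 \<le> Re (qf S x)" for x
  proof -
    have "qf S x = (\<Sum>e\<in>E. (of_real (s e) * cinner e x) * cinner x e)"
      by (simp add: qf_def Sx sum_smult_cinner)
    also have "\<dots> = (\<Sum>e\<in>E. of_real (s e * (cmod (cinner e x))^2))"
    proof (intro sum.cong refl)
      fix e
      have "cinner x e = cnj (cinner e x)" by (rule cinner_sym)
      then show "(of_real (s e) * cinner e x) * cinner x e = of_real (s e * (cmod (cinner e x))^2)"
        by (simp add: mult.assoc zcnj)
    qed
    finally have "Re (qf S x) = (\<Sum>e\<in>E. s e * (cmod (cinner e x))^2)" by simp
    also have "\<dots> \<ge> 0" by (intro sum_nonneg mult_nonneg_nonneg) (auto simp: s_def lam0)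
    finally show ?thesis .
  qed
  then have "psd S" using hS by (simp add: psd_iff)
  then show ?thesis using SS by blast
qed

lemma psd_sqrt_unique:
  fixes S T :: "complex^'n^'n"
  assumes pS: "psd S" and pT: "psd T" and eq: "S ** S = T ** T"
  shows "S = T"
proof -
  define D where "D = S - T"
  have hS: "adj S = S" and hT: "adj T = T" using pS pT by (auto simp: psd_iff)
  have hD: "adj D = D" by (simp add: D_def adj_diff hS hT)
  then obtain E lam where E: "eigsys D E lam" and full: "\<forall>x. x = (\<Sum>e\<in>E. cinner e x *s e)"
    using herm_spectral by blast
  have De0: "D *v e = 0" if eE: "e \<in> E" for e
  proof -
    define l where "l = lam e"
    have De: "D *v e = of_real l *s e" using E eE unfolding eigsys_def l_def by blast
    have ee: "cinner e e = 1" using E eE unfolding eigsys_def by blast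
    have Se: "S *v e = of_real l *s e + T *v e"
      using De by (simp add: D_def matrix_vector_mult_diff_rdistrib algebra_simps)
    have "S *v (S *v e) = T *v (T *v e)" using eq by (simp add: matrix_vector_mul_assoc)
    then have z: "cinner e (S *v (S *v e)) - cinner e (T *v (T *v e)) = 0" by simp
    have c1: "cinner e (S *v (S *v e)) = of_real l * qf S e + cinner e (S *v (T *v e))"
      by (simp add: Se matrix_vector_right_distrib mat_vec_scale cinner_add_right cinner_scale_right qf_def algebra_simps)
    have "cinner e (D *v (T *v e)) = cinner (D *v e) (T *v e)"
      using cinner_adj[of e D "T *v e"] hD by simp
    also have "\<dots> = of_real l * qf T e" by (simp add: De cinner_scale_left qf_def)
    finally have c2: "cinner e (S *v (T *v e)) - cinner e (T *v (T *v e)) = of_real l * qf T e"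
      by (simp add: D_def matrix_vector_mult_diff_rdistrib cinner_diff_right)
    have key: "of_real l * (qf S e + qf T e) = 0"
      using z c1 c2 by (simp add: algebra_simps)
    show ?thesis
    proof (cases "l = 0")
      case True then show ?thesis using De by simp
    next
      case False
      then have "qf S e + qf T e = 0" using key by simp
      then have "Re (qf S e) + Re (qf T e) = 0" by (metis plus_complex.sel(1) zero_complex.sel(1))
      moreover have "0 \<le> Re (qf S e)" "0 \<le> Re (qf T e)" using pS pT by (auto simp: psd_iff)
      ultimately have "Re (qf S e) = 0" "Re (qf T e) = 0" by linarith+
      then have "S *v e = 0" "T *v e = 0" using psd_kernel pS pT by blast+
      then show ?thesis by (simp add: D_def matrix_vector_mult_diff_rdistrib)
    qed
  qed
  have "D *v x = 0" for x
  proof -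
    have "D *v x = D *v (\<Sum>e\<in>E. cinner e x *s e)" by (rule arg_cong[OF full[rule_format]])
    also have "\<dots> = (\<Sum>e\<in>E. cinner e x *s (D *v e))" by (simp add: mv_sum mat_vec_scale)
    also have "\<dots> = 0" by (intro sum.neutral) (simp add: De0)
    finally show ?thesis .
  qed
  then have "D = 0" by (simp add: matrix_eq)
  then show ?thesis by (simp add: D_def)
qed

lemma msqrt_props:
  fixes A :: "complex^'n^'n"
  assumes "psd A" shows "psd (msqrt A) \<and> msqrt A ** msqrt A = A"
proof -
  have "\<exists>!S. psd S \<and> S ** S = A"
    using psd_sqrt_ex[OF assms] psd_sqrt_unique by blast
  then show ?thesis unfolding msqrt_def by (rule theI')
qed



lemma mm_scaleR_left: "(c *\<^sub>R A) ** (B::complex^'n^'n) = c *\<^sub>R (A ** B)"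
  by (simp add: matrix_matrix_mult_def vec_eq_iff sum_distrib_left cscaleR mult.assoc)
lemma mm_scaleR_right: "(A::complex^'n^'n) ** (c *\<^sub>R B) = c *\<^sub>R (A ** B)"
  by (simp add: matrix_matrix_mult_def vec_eq_iff sum_distrib_left cscaleR mult.left_commute)
lemma mm_add_left: "(A + B) ** (C::complex^'n^'n) = A ** C + B ** C"
  by (simp add: matrix_matrix_mult_def vec_eq_iff sum.distrib algebra_simps)
lemma mm_add_right: "(A::complex^'n^'n) ** (B + C) = A ** B + A ** C"
  by (simp add: matrix_matrix_mult_def vec_eq_iff sum.distrib algebra_simps)
lemma mm_sum_left: "(sum f S) ** (B::complex^'n^'n) = sum (\<lambda>l. f l ** B) S"
  by (induction S rule: infinite_finite_induct) (auto simp: mm_add_left)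
lemma mm_sum_right: "(B::complex^'n^'n) ** (sum f S) = sum (\<lambda>l. B ** f l) S"
  by (induction S rule: infinite_finite_induct) (auto simp: mm_add_right)

lemma sand_sum: "(S::complex^'n^'n) ** (sum f L) ** S = sum (\<lambda>l. S ** f l ** S) L"
  by (simp add: mm_sum_left mm_sum_right)
lemma sand_scaleR: "(S::complex^'n^'n) ** (c *\<^sub>R X) ** S = c *\<^sub>R (S ** X ** S)"
  by (simp add: mm_scaleR_left mm_scaleR_right)
lemma sand_lin: "(S::complex^'n^'n) ** (c *\<^sub>R (X + d *\<^sub>R Y)) ** S = c *\<^sub>R (S ** X ** S + d *\<^sub>R (S ** Y ** S))"
  by (simp add: mm_scaleR_left mm_scaleR_right mm_add_left mm_add_right)

lemma cond_sum:
  fixes c :: "nat \<Rightarrow> real" and X :: "nat \<Rightarrow> complex^'n^'n"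
  assumes "cond_prob p m"
  shows "(\<Sum>a\<in>UNIV. \<Sum>l<m. (c l * p a x l) *\<^sub>R X l) = (\<Sum>l<m. c l *\<^sub>R X l)"
proof -
  have "(\<Sum>a\<in>UNIV. \<Sum>l<m. (c l * p a x l) *\<^sub>R X l) = (\<Sum>l<m. \<Sum>a\<in>UNIV. (c l * p a x l) *\<^sub>R X l)"
    by (rule sum.swap)
  also have "\<dots> = (\<Sum>l<m. (c l * (\<Sum>a\<in>UNIV. p a x l)) *\<^sub>R X l)"
    by (simp add: scaleR_sum_left sum_distrib_left)
  also have "\<dots> = (\<Sum>l<m. c l *\<^sub>R X l)"
    using assms unfolding cond_prob_def by (intro sum.cong) auto
  finally show ?thesis .
qed

lemma JM_sum:
  assumes "JM D" shows "(\<Sum>a\<in>UNIV. D a x) = mat 1"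
proof -
  obtain m G p where G: "\<forall>l<m. psd (G l)" "(\<Sum>l<m. G l) = mat 1" "cond_prob p m"
    and D: "\<forall>a x. D a x = (\<Sum>l<m. p a x l *\<^sub>R G l)"
    using assms unfolding JM_def by blast
  have "(\<Sum>a\<in>UNIV. D a x) = (\<Sum>a\<in>UNIV. \<Sum>l<m. (1 * p a x l) *\<^sub>R G l)" using D by simp
  also have "\<dots> = (\<Sum>l<m. 1 *\<^sub>R G l)" by (rule cond_sum[OF G(3)])
  finally show ?thesis using G(2) by simp
qed

lemma JM_sandwich:
  fixes S :: "complex^'n^'n"
  assumes "JM D" and hS: "adj S = S" and tS: "mtrace (S ** S) = 1"
  shows "LHS (\<lambda>a x. S ** D a x ** S)"
proof -
  obtain m G p where G: "\<forall>l<m. psd (G l)" "(\<Sum>l<m. G l) = mat 1" "cond_prob p m"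
    and D: "\<forall>a x. D a x = (\<Sum>l<m. p a x l *\<^sub>R G l)"
    using assms unfolding JM_def by blast
  define H where "H l = S ** G l ** S" for l
  have pH: "psd (H l)" if "l < m" for l
    using psd_congr[OF G(1)[rule_format, OF that], of S] hS by (simp add: H_def)
  define t where "t l = Re (mtrace (H l))" for l
  have t0: "0 \<le> t l" and tH: "mtrace (H l) = of_real (t l)" if "l < m" for l
    using psd_trace[OF pH[OF that]] by (auto simp: t_def)
  have dSS: "density_op (S ** S)"
    using psd_congr[OF psd_mat1, of S] hS tS by (simp add: density_op_def)
  define R where "R l = (if t l = 0 then S ** S else (1 / t l) *\<^sub>R H l)" for l
  have dR: "density_op (R l)" if "l < m" for l
  proof (cases "t l = 0")
    case True then show ?thesis using dSS by (simp add: R_def)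
  next
    case False
    then have "t l > 0" using t0[OF that] by simp
    then show ?thesis using False pH[OF that] tH[OF that]
      by (simp add: R_def density_op_def psd_scaleR mtrace_scaleR)
  qed
  have tR: "(t l * p a x l) *\<^sub>R R l = p a x l *\<^sub>R H l" if "l < m" for l a x
  proof (cases "t l = 0")
    case True
    then have "H l = 0" using psd_trace0[OF pH[OF that]] tH[OF that] by simp
    then show ?thesis using True by simp
  next
    case False then show ?thesis by (simp add: R_def)
  qed
  have sumt: "(\<Sum>l<m. t l) = 1"
  proof -
    have "(\<Sum>l<m. H l) = S ** S" unfolding H_def using G(2)
      by (simp add: sand_sum[symmetric])
    then have "mtrace (\<Sum>l<m. H l) = 1" using tS by simp
    then have "(\<Sum>l<m. of_real (t l)) = (1::complex)" by (simp add: mtrace_sum tH)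
    then show ?thesis by (metis of_real_eq_1_iff of_real_sum)
  qed
  have eq: "S ** D a x ** S = (\<Sum>l<m. (t l * p a x l) *\<^sub>R R l)" for a x
    using D by (simp add: sand_sum sand_scaleR tR H_def)
  show ?thesis unfolding LHS_def
    using t0 sumt G(3) dR eq by blast
qed



lemma LHS_unsandwich:
  fixes S Si :: "complex^'n^'n" and \<tau> :: "'o::finite \<Rightarrow> 'x::finite \<Rightarrow> complex^'n^'n"
  assumes L: "LHS \<tau>" and inv1: "Si ** S = mat 1" and inv2: "S ** Si = mat 1" and hSi: "adj Si = Si"
    and red: "\<forall>x. (\<Sum>a\<in>UNIV. \<tau> a x) = S ** S"
  shows "JM (\<lambda>a x. Si ** \<tau> a x ** Si)"
proof -
  obtain m q p R where q: "\<forall>l<m. 0 \<le> q l" "(\<Sum>l<m. q l) = 1" and cp: "cond_prob p m"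
    and dR: "\<forall>l<m. density_op (R l)"
    and T: "\<forall>a x. \<tau> a x = (\<Sum>l<m. (q l * p a x l) *\<^sub>R R l)"
    using L unfolding LHS_def by blast
  define G where "G l = q l *\<^sub>R (Si ** R l ** Si)" for l
  have pG: "psd (G l)" if "l < m" for l
  proof -
    have "psd (R l)" using dR that by (simp add: density_op_def)
    then have "psd (adj Si ** R l ** Si)" by (rule psd_congr)
    then show ?thesis using q(1) that hSi by (simp add: G_def psd_scaleR)
  qed
  have "(\<Sum>a\<in>UNIV. \<tau> a undefined) = (\<Sum>l<m. q l *\<^sub>R R l)"
    using T cond_sum[OF cp, of q undefined R] by simp
  then have sR: "(\<Sum>l<m. q l *\<^sub>R R l) = S ** S" using red by simp
  have sG: "(\<Sum>l<m. G l) = mat 1"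
  proof -
    have "(\<Sum>l<m. G l) = Si ** (\<Sum>l<m. q l *\<^sub>R R l) ** Si"
      by (simp add: G_def sand_sum sand_scaleR)
    also have "\<dots> = (Si ** S) ** (S ** Si)" by (simp add: sR matrix_mul_assoc)
    finally show ?thesis using inv1 inv2 by simp
  qed
  have eq: "Si ** \<tau> a x ** Si = (\<Sum>l<m. p a x l *\<^sub>R G l)" for a x
    using T by (simp add: sand_sum sand_scaleR G_def mult.commute)
  show ?thesis unfolding JM_def using pG sG cp eq by blast
qed

definition IRset :: "('o::finite \<Rightarrow> 'x::finite \<Rightarrow> complex^'n^'n) \<Rightarrow> real set" where
  "IRset M = {t. 0 \<le> t \<and> (\<exists>D' D. JM D' \<and> JM D \<and>
      (\<forall>a x. (1 / (1 + t)) *\<^sub>R (M a x + t *\<^sub>R D' a x) = D a x))}"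

definition SRset :: "('o::finite \<Rightarrow> 'x::finite \<Rightarrow> complex^'n^'n) \<Rightarrow> real set" where
  "SRset \<sigma> = {t. 0 \<le> t \<and> (\<exists>\<tau>' \<tau>. LHS \<tau>' \<and> LHS \<tau> \<and>
      (\<forall>x. (\<Sum>a\<in>UNIV. \<tau>' a x) = (\<Sum>a\<in>UNIV. \<sigma> a x)) \<and>
      (\<forall>x. (\<Sum>a\<in>UNIV. \<tau> a x) = (\<Sum>a\<in>UNIV. \<sigma> a x)) \<and>
      (\<forall>a x. (1 / (1 + t)) *\<^sub>R (\<sigma> a x + t *\<^sub>R \<tau>' a x) = \<tau> a x))}"

lemma IR_JM_eq: "IR_JM M = Inf (IRset M)" by (simp add: IR_JM_def IRset_def)
lemma SR_CLHS_eq: "SR_CLHS M = Inf (SRset M)" by (simp add: SR_CLHS_def SRset_def)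

lemma MA_sum: "is_MA B \<Longrightarrow> (\<Sum>a\<in>UNIV. B a x) = mat 1"
  by (simp add: is_MA_def is_POVM_def)

lemma IR_sub_SR:
  fixes S :: "complex^'n^'n" and B :: "'o::finite \<Rightarrow> 'x::finite \<Rightarrow> complex^'n^'n"
  assumes MA: "is_MA B" and hS: "adj S = S" and tS: "mtrace (S ** S) = 1"
  shows "IRset B \<subseteq> SRset (\<lambda>a x. S ** B a x ** S)"
proof
  fix t assume "t \<in> IRset B"
  then obtain D' D where t0: "0 \<le> t" and J: "JM D'" "JM D"
    and eq: "\<forall>a x. (1 / (1 + t)) *\<^sub>R (B a x + t *\<^sub>R D' a x) = D a x"
    unfolding IRset_def by blast
  have L: "LHS (\<lambda>a x. S ** D' a x ** S)" "LHS (\<lambda>a x. S ** D a x ** S)"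
    using JM_sandwich[OF J(1) hS tS] JM_sandwich[OF J(2) hS tS] by auto
  have sB: "(\<Sum>a\<in>UNIV. S ** B a x ** S) = S ** S" for x
    by (simp add: sand_sum[symmetric] MA_sum[OF MA])
  have s1: "(\<Sum>a\<in>UNIV. S ** D' a x ** S) = S ** S" for x
    by (simp add: sand_sum[symmetric] JM_sum[OF J(1)])
  have s2: "(\<Sum>a\<in>UNIV. S ** D a x ** S) = S ** S" for x
    by (simp add: sand_sum[symmetric] JM_sum[OF J(2)])
  have e: "(1 / (1 + t)) *\<^sub>R (S ** B a x ** S + t *\<^sub>R (S ** D' a x ** S)) = S ** D a x ** S" for a x
    using eq[rule_format, of a x, symmetric] by (simp add: sand_lin)
  show "t \<in> SRset (\<lambda>a x. S ** B a x ** S)"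
    unfolding SRset_def using t0 L sB s1 s2 e by auto
qed

lemma SR_sub_IR:
  fixes S Si :: "complex^'n^'n" and B :: "'o::finite \<Rightarrow> 'x::finite \<Rightarrow> complex^'n^'n"
  assumes MA: "is_MA B" and inv1: "Si ** S = mat 1" and inv2: "S ** Si = mat 1" and hSi: "adj Si = Si"
  shows "SRset (\<lambda>a x. S ** B a x ** S) \<subseteq> IRset B"
proof
  fix t assume "t \<in> SRset (\<lambda>a x. S ** B a x ** S)"
  then obtain \<tau>' \<tau> where t0: "0 \<le> t" and L: "LHS \<tau>'" "LHS \<tau>"
    and r1: "\<forall>x. (\<Sum>a\<in>UNIV. \<tau>' a x) = (\<Sum>a\<in>UNIV. S ** B a x ** S)"
    and r2: "\<forall>x. (\<Sum>a\<in>UNIV. \<tau> a x) = (\<Sum>a\<in>UNIV. S ** B a x ** S)"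
    and eq: "\<forall>a x. (1 / (1 + t)) *\<^sub>R (S ** B a x ** S + t *\<^sub>R \<tau>' a x) = \<tau> a x"
    unfolding SRset_def by blast
  have sB: "(\<Sum>a\<in>UNIV. S ** B a x ** S) = S ** S" for x
    by (simp add: sand_sum[symmetric] MA_sum[OF MA])
  have J: "JM (\<lambda>a x. Si ** \<tau>' a x ** Si)" "JM (\<lambda>a x. Si ** \<tau> a x ** Si)"
    using LHS_unsandwich[OF L(1) inv1 inv2 hSi] LHS_unsandwich[OF L(2) inv1 inv2 hSi] r1 r2 sB
    by auto
  have bk: "Si ** (S ** X ** S) ** Si = X" for X
  proof -
    have "Si ** (S ** X ** S) ** Si = (Si ** S) ** X ** (S ** Si)" by (simp add: matrix_mul_assoc)
    then show ?thesis using inv1 inv2 by simp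
  qed
  have e: "(1 / (1 + t)) *\<^sub>R (B a x + t *\<^sub>R (Si ** \<tau>' a x ** Si)) = Si ** \<tau> a x ** Si" for a x
  proof -
    have "Si ** \<tau> a x ** Si = Si ** ((1 / (1 + t)) *\<^sub>R (S ** B a x ** S + t *\<^sub>R \<tau>' a x)) ** Si"
      using eq by simp
    also have "\<dots> = (1 / (1 + t)) *\<^sub>R (B a x + t *\<^sub>R (Si ** \<tau>' a x ** Si))"
      by (simp add: sand_lin bk)
    finally show ?thesis by simp
  qed
  show "t \<in> IRset B" unfolding IRset_def using t0 J e by auto
qed



lemma JM_I:
  fixes I :: "'i set" and G :: "'i \<Rightarrow> complex^'n^'n" and p :: "'o::finite \<Rightarrow> 'x::finite \<Rightarrow> 'i \<Rightarrow> real"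
    and M :: "'o \<Rightarrow> 'x \<Rightarrow> complex^'n^'n"
  assumes fin: "finite I" and pG: "\<forall>i\<in>I. psd (G i)" and sG: "(\<Sum>i\<in>I. G i) = mat 1"
    and p0: "\<forall>a x i. i \<in> I \<longrightarrow> 0 \<le> p a x i" and p1: "\<forall>x i. i \<in> I \<longrightarrow> (\<Sum>a\<in>UNIV. p a x i) = 1"
    and M: "\<forall>a x. M a x = (\<Sum>i\<in>I. p a x i *\<^sub>R G i)"
  shows "JM M"
proof -
  obtain h where h: "bij_betw h {0..<card I} I" using ex_bij_betw_nat_finite[OF fin] by blast
  define m where "m = card I"
  have h': "bij_betw h {..<m} I" using h by (simp add: atLeast0LessThan m_def)
  have hI: "h l \<in> I" if "l < m" for l using h' that by (auto simp: bij_betw_def)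
  have re: "(\<Sum>l<m. f (h l)) = (\<Sum>i\<in>I. f i)" for f :: "'i \<Rightarrow> complex^'n^'n"
    by (rule sum.reindex_bij_betw[OF h'])
  have c1: "\<forall>l<m. psd (G (h l))" using pG hI by blast
  have c2: "(\<Sum>l<m. G (h l)) = mat 1" using re[of G] sG by simp
  have c3: "cond_prob (\<lambda>a x l. p a x (h l)) m" unfolding cond_prob_def using p0 p1 hI by blast
  have c4: "\<forall>a x. M a x = (\<Sum>l<m. p a x (h l) *\<^sub>R G (h l))"
    using M re[of "\<lambda>i. p _ _ i *\<^sub>R G i"] by simp
  show ?thesis unfolding JM_def
    by (rule exI[of _ m], rule exI[of _ "\<lambda>l. G (h l)"], rule exI[of _ "\<lambda>a x l. p a x (h l)"])
       (intro conjI c1 c2 c3 c4)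
qed

lemma IRset_nonempty:
  fixes B :: "'o::finite \<Rightarrow> 'x::finite \<Rightarrow> complex^'n^'n"
  assumes MA: "is_MA B"
  shows "real CARD('x) - 1 \<in> IRset B"
proof -
  define K where "K = real CARD('x)"
  define N where "N = real CARD('o)"
  have K1: "K \<ge> 1" unfolding K_def using finite_UNIV_card_ge_0[where 'a='x] by simp
  have N1: "N \<ge> 1" unfolding N_def using finite_UNIV_card_ge_0[where 'a='o] by simp
  have psdB: "psd (B a x)" for a x using MA by (simp add: is_MA_def is_POVM_def)
  define D' where "D' = (\<lambda>(a::'o) (x::'x). (1/N) *\<^sub>R (mat 1 :: complex^'n^'n))"
  have sumN: "(\<Sum>a\<in>(UNIV::'o set). 1 / N) = 1" using N1 by (simp add: N_def)
  have JD': "JM D'"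
    by (rule JM_I[where I="UNIV::unit set" and G="\<lambda>_. mat 1" and p="\<lambda>a x i. 1/N"])
       (use N1 sumN in \<open>auto simp: psd_mat1 D'_def\<close>)
  define D where "D = (\<lambda>a x. (1/K) *\<^sub>R (B a x + (K - 1) *\<^sub>R D' a x))"
  define G where "G = (\<lambda>(y::'x,b::'o). (1/K) *\<^sub>R B b y)"
  define p where "p = (\<lambda>(a::'o) (x::'x) (yb::'x\<times>'o). if fst yb = x then (if a = snd yb then 1 else 0) else 1/N)"
  have sG: "(\<Sum>i\<in>UNIV. G i) = mat 1"
  proof -
    have "(\<Sum>i\<in>UNIV. G i) = (\<Sum>y\<in>UNIV. \<Sum>b\<in>UNIV. G (y, b))"
      by (simp add: sum.cartesian_product UNIV_Times_UNIV[symmetric] del: UNIV_Times_UNIV)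
    also have "\<dots> = (\<Sum>y\<in>(UNIV::'x set). (1/K) *\<^sub>R mat 1)"
      by (simp add: G_def scaleR_sum_right[symmetric] MA_sum[OF MA])
    also have "\<dots> = mat 1" using K1 by (simp add: K_def sum_constant_scaleR del: sum_constant)
    finally show ?thesis .
  qed
  have p1: "(\<Sum>a\<in>UNIV. p a x i) = 1" for x i
  proof (cases "fst i = x")
    case True then show ?thesis by (simp add: p_def)
  next
    case False then show ?thesis using sumN by (simp add: p_def)
  qed
  have JD: "JM D"
  proof (rule JM_I[where I=UNIV and G=G and p=p])
    show "finite (UNIV::('x\<times>'o) set)" by simp
    show "\<forall>i\<in>UNIV. psd (G i)" using K1 by (auto simp: G_def psdB psd_scaleR)
    show "(\<Sum>i\<in>UNIV. G i) = mat 1" by (rule sG)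
    show "\<forall>a x i. i \<in> UNIV \<longrightarrow> 0 \<le> p a x i" using N1 by (auto simp: p_def)
    show "\<forall>x i. i \<in> UNIV \<longrightarrow> (\<Sum>a\<in>UNIV. p a x i) = 1" using p1 by blast
    show "\<forall>a x. D a x = (\<Sum>i\<in>UNIV. p a x i *\<^sub>R G i)"
    proof (intro allI)
      fix a x
      define f where "f y = (\<Sum>b\<in>UNIV. p a x (y,b) *\<^sub>R G (y, b))" for y
      have s1: "(\<Sum>i\<in>UNIV. p a x i *\<^sub>R G i) = (\<Sum>y\<in>UNIV. f y)"
        unfolding f_def by (simp add: sum.cartesian_product UNIV_Times_UNIV[symmetric] del: UNIV_Times_UNIV)
      have s2: "(\<Sum>y\<in>UNIV. f y) = f x + (\<Sum>y\<in>UNIV-{x}. f y)"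
        by (rule sum.remove) simp_all
      have s3': "f x = (\<Sum>b\<in>UNIV. if b = a then (1/K) *\<^sub>R B b x else 0)"
        unfolding f_def by (intro sum.cong refl) (auto simp: p_def G_def)
      have s3: "f x = (1/K) *\<^sub>R B a x"
        unfolding s3' by (simp only: sum.delta finite UNIV_I if_True)
      have s4: "(\<Sum>y\<in>UNIV-{x}. f y) = (\<Sum>y\<in>UNIV-{x}. (1/N) *\<^sub>R ((1/K) *\<^sub>R (mat 1 :: complex^'n^'n)))"
      proof (intro sum.cong refl)
        fix y assume "y \<in> UNIV - {x}"
        then have "y \<noteq> x" by simp
        then show "f y = (1/N) *\<^sub>R ((1/K) *\<^sub>R (mat 1 :: complex^'n^'n))"
          unfolding f_def by (simp add: p_def G_def scaleR_sum_right[symmetric] MA_sum[OF MA])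
      qed
      have s5: "(\<Sum>y\<in>UNIV-{x}. (1/N) *\<^sub>R ((1/K) *\<^sub>R (mat 1 :: complex^'n^'n)))
          = (K - 1) *\<^sub>R ((1/N) *\<^sub>R ((1/K) *\<^sub>R (mat 1 :: complex^'n^'n)))"
        by (simp add: sum_constant_scaleR card_Diff_singleton K_def of_nat_diff del: sum_constant)
      have "(\<Sum>i\<in>UNIV. p a x i *\<^sub>R G i) = (1/K) *\<^sub>R B a x + (K - 1) *\<^sub>R ((1/N) *\<^sub>R ((1/K) *\<^sub>R (mat 1 :: complex^'n^'n)))"
        by (simp only: s1 s2 s3 s4 s5)
      then show "D a x = (\<Sum>i\<in>UNIV. p a x i *\<^sub>R G i)"
        by (simp add: D_def D'_def scaleR_add_right)
    qed
  qed
  have t0: "0 \<le> K - 1" using K1 by simp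
  have eq: "(1 / (1 + (K - 1))) *\<^sub>R (B a x + (K - 1) *\<^sub>R D' a x) = D a x" for a x
    by (simp add: D_def)
  show ?thesis unfolding IRset_def K_def[symmetric] using t0 JD' JD eq by blast
qed



theorem lemma1:
  fixes B :: "'o::finite \<Rightarrow> 'x::finite \<Rightarrow> complex^'n^'n"
  assumes "is_MA B"
  shows "IR_JM B \<in> (\<lambda>\<rho>. SR_CLHS (sandwich \<rho> B)) ` {\<rho>. density_op \<rho>}
       \<and> (\<forall>\<rho>. density_op \<rho> \<longrightarrow> SR_CLHS (sandwich \<rho> B) \<le> IR_JM B)
       \<and> (\<forall>\<rho>. density_op \<rho> \<and> invertible \<rho> \<longrightarrow> SR_CLHS (sandwich \<rho> B) = IR_JM B)"
proof -
  have basics: "adj (msqrt \<rho>) = msqrt \<rho> \<and> msqrt \<rho> ** msqrt \<rho> = \<rho> \<and> mtrace (msqrt \<rho> ** msqrt \<rho>) = 1"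
    if "density_op \<rho>" for \<rho> :: "complex^'n^'n"
    using msqrt_props[of \<rho>] that by (auto simp: density_op_def psd_iff)
  have sw: "sandwich \<rho> B = (\<lambda>a x. msqrt \<rho> ** B a x ** msqrt \<rho>)" for \<rho>
    by (simp add: sandwich_def)
  have p3: "\<forall>\<rho>. density_op \<rho> \<and> invertible \<rho> \<longrightarrow> SR_CLHS (sandwich \<rho> B) = IR_JM B"
  proof (intro allI impI)
    fix \<rho> :: "complex^'n^'n" assume "density_op \<rho> \<and> invertible \<rho>"
    then have d: "density_op \<rho>" and iv: "invertible \<rho>" by auto
    define S where "S = msqrt \<rho>"
    have hS: "adj S = S" and SS: "S ** S = \<rho>" and tS: "mtrace (S ** S) = 1"
      using basics[OF d] by (auto simp: S_def)
    obtain P where P1: "\<rho> ** P = mat 1" and P2: "P ** \<rho> = mat 1" using iv invertible_def by blast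
    define Si where "Si = S ** P"
    have inv2: "S ** Si = mat 1" using P1 SS by (simp add: Si_def matrix_mul_assoc)
    have L: "(P ** S) ** S = mat 1" using P2 SS by (simp add: matrix_mul_assoc[symmetric])
    have "P ** S = (P ** S) ** (S ** Si)" using inv2 by simp
    also have "\<dots> = ((P ** S) ** S) ** Si" by (simp add: matrix_mul_assoc)
    also have "\<dots> = Si" using L by simp
    finally have PSi: "P ** S = Si" .
    have inv1: "Si ** S = mat 1" using L PSi by simp
    have a1: "adj Si ** S = mat 1"
    proof -
      have "adj Si ** S = adj (S ** Si)" by (simp add: adj_mult hS)
      then show ?thesis using inv2 adj_mat by simp
    qed
    have "adj Si = adj Si ** (S ** Si)" using inv2 by simp
    also have "\<dots> = (adj Si ** S) ** Si" by (simp add: matrix_mul_assoc)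
    also have "\<dots> = Si" using a1 by simp
    finally have hSi: "adj Si = Si" .
    have "SRset (\<lambda>a x. S ** B a x ** S) = IRset B"
      using IR_sub_SR[OF assms hS tS] SR_sub_IR[OF assms inv1 inv2 hSi] by blast
    then show "SR_CLHS (sandwich \<rho> B) = IR_JM B"
      by (simp add: IR_JM_eq SR_CLHS_eq sw S_def)
  qed
  have p2: "\<forall>\<rho>. density_op \<rho> \<longrightarrow> SR_CLHS (sandwich \<rho> B) \<le> IR_JM B"
  proof (intro allI impI)
    fix \<rho> :: "complex^'n^'n" assume d: "density_op \<rho>"
    define S where "S = msqrt \<rho>"
    have hS: "adj S = S" and tS: "mtrace (S ** S) = 1"
      using basics[OF d] by (auto simp: S_def)
    have sub: "IRset B \<subseteq> SRset (\<lambda>a x. S ** B a x ** S)" by (rule IR_sub_SR[OF assms hS tS])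
    have ne: "IRset B \<noteq> {}" using IRset_nonempty[OF assms] by blast
    have bdd: "bdd_below (SRset (\<lambda>a x. S ** B a x ** S))"
      unfolding bdd_below_def SRset_def by auto
    have "Inf (SRset (\<lambda>a x. S ** B a x ** S)) \<le> Inf (IRset B)"
      by (rule cInf_superset_mono[OF ne bdd sub])
    then show "SR_CLHS (sandwich \<rho> B) \<le> IR_JM B"
      by (simp add: IR_JM_eq SR_CLHS_eq sw S_def)
  qed
  define n where "n = real CARD('n)"
  have n0: "n > 0" unfolding n_def by simp
  define \<rho>0 :: "complex^'n^'n" where "\<rho>0 = (1 / n) *\<^sub>R mat 1"
  have d0: "density_op \<rho>0"
  proof -
    have "psd \<rho>0" unfolding \<rho>0_def using n0 by (simp add: psd_scaleR psd_mat1)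
    moreover have "mtrace \<rho>0 = 1" unfolding \<rho>0_def using n0
      by (simp add: mtrace_scaleR mtrace_mat1 n_def)
    ultimately show ?thesis by (simp add: density_op_def)
  qed
  have i0: "invertible \<rho>0"
    unfolding invertible_def \<rho>0_def
    by (rule exI[of _ "n *\<^sub>R mat 1"]) (use n0 in \<open>simp add: mm_scaleR_left mm_scaleR_right\<close>)
  have "SR_CLHS (sandwich \<rho>0 B) = IR_JM B" using p3 d0 i0 by blast
  then have p1: "IR_JM B \<in> (\<lambda>\<rho>. SR_CLHS (sandwich \<rho> B)) ` {\<rho>. density_op \<rho>}"
    using d0 by (metis (mono_tags, lifting) image_eqI mem_Collect_eq)
  show ?thesis using p1 p2 p3 by blast
qed

end
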